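(* Let $\lambda\in\mathcal P_\epsilon(N)$ and let $\mathbf i$ be an admissible sequence for $\lambda$. Then $\Delta(\lambda^{\mathbf i})\subseteq\Delta(\lambda)$. Moreover, if $\lambda$ is non-singular then $\lambda^{\mathbf i}$ is non-singular.
   Context: $\mathcal P_\epsilon(N)$ ($\epsilon=\pm1$) is the set of partitions $\lambda=(\lambda_1\ge\dots\ge\lambda_n\ge1)$ of $N$ in which every part $m$ with $\epsilon(-1)^m=1$ occurs with even multiplicity; conventions $\lambda_0=0$, $\lambda_i=0$ for $i>n$. A 2-step of $\lambda$ is a pair $(i,i+1)$, $1\le i<n$, with $\epsilon(-1)^{\lambda_i}=\epsilon(-1)^{\lambda_{i+1}}=-1$, $\lambda_{i-1}\ne\lambda_i$, $\lambda_{i+1}\ne\lambda_{i+2}$; $\Delta(\lambda)$ is the set of 2-steps. A 2-step $(i,i+1)$ is bad if ($i>1$ and $\lambda_{i-1}-\lambda_i$ is even) or $\lambda_{i+1}-\lambda_{i+2}$ is even, good otherwise; $\lambda$ is non-singular if all its 2-steps are good. Kempken–Spaltenstein (KS) algorithm: for $1\le i\le n$, Case 1 occurs at $i$ if $\lambda_i\ge\lambda_{i+1}+2$, and then $\lambda^{(i)}=(\lambda_1-2,\dots,\lambda_i-2,\lambda_{i+1},\dots,\lambda_n)$; Case 2 occurs at $i$ if $(i,i+1)\in\Delta(\lambda)$ and $\lambda_i=\lambda_{i+1}$, and then $\lambda^{(i)}=(\lambda_1-2,\dots,\lambda_{i-1}-2,\lambda_i-1,\lambda_{i+1}-1,\lambda_{i+2},\dots,\lambda_n)$;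 zero parts are discarded and $\lambda^{(i)}\in\mathcal P_\epsilon(N-2i)$. Index $i$ is admissible for $\lambda$ if Case 1 or Case 2 occurs at $i$. A sequence $\mathbf i=(i_1,\dots,i_l)$ is admissible for $\lambda$ if each $i_k$ is admissible for $\lambda^{(i_1,\dots,i_{k-1})}$, where $\lambda^{\emptyset}=\lambda$ and $\lambda^{(i_1,\dots,i_k)}=(\lambda^{(i_1,\dots,i_{k-1})})^{(i_k)}$; write $\lambda^{\mathbf i}=\lambda^{(i_1,\dots,i_l)}$. *)

theory Defs
  imports Main
begin

text \<open>A partition is a list of positive naturals in nonincreasing order.
  Parts are indexed from 1; lambda_0 = 0 and lambda_i = 0 for i > n.\<close>

definition part :: "nat list \<Rightarrow> nat \<Rightarrow> nat" where
  "part lam i = (if 1 \<le> i \<and> i \<le> length lam then lam ! (i - 1) else 0)"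

definition sgn_par :: "int \<Rightarrow> nat \<Rightarrow> int" where
  "sgn_par eps m = eps * (-1) ^ m"

definition P_eps :: "int \<Rightarrow> nat \<Rightarrow> nat list \<Rightarrow> bool" where
  "P_eps eps N lam \<longleftrightarrow>
     sorted_wrt (\<ge>) lam \<and> (\<forall>x \<in> set lam. x \<ge> 1) \<and> sum_list lam = N \<and>
     (\<forall>m. sgn_par eps m = 1 \<longrightarrow> even (count_list lam m))"

definition two_steps :: "int \<Rightarrow> nat list \<Rightarrow> nat set" where
  "two_steps eps lam = {i. 1 \<le> i \<and> i < length lam \<and>
      sgn_par eps (part lam i) = -1 \<and> sgn_par eps (part lam (i + 1)) = -1 \<and>
      part lam (i - 1) \<noteq> part lam i \<and> part lam (i + 1) \<noteq> part lam (i + 2)}"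

definition bad_step :: "nat list \<Rightarrow> nat \<Rightarrow> bool" where
  "bad_step lam i \<longleftrightarrow>
     (i > 1 \<and> even (int (part lam (i - 1)) - int (part lam i))) \<or>
     even (int (part lam (i + 1)) - int (part lam (i + 2)))"

definition non_singular :: "int \<Rightarrow> nat list \<Rightarrow> bool" where
  "non_singular eps lam \<longleftrightarrow> (\<forall>i \<in> two_steps eps lam. \<not> bad_step lam i)"

definition ks_case1 :: "nat list \<Rightarrow> nat \<Rightarrow> bool" where
  "ks_case1 lam i \<longleftrightarrow> 1 \<le> i \<and> i \<le> length lam \<and> part lam i \<ge> part lam (i + 1) + 2"

definition ks_case2 :: "int \<Rightarrow> nat list \<Rightarrow> nat \<Rightarrow> bool" where
  "ks_case2 eps lam i \<longleftrightarrow> i \<in> two_steps eps lam \<and> part lam i = part lam (i + 1)"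

definition ks_admissible :: "int \<Rightarrow> nat list \<Rightarrow> nat \<Rightarrow> bool" where
  "ks_admissible eps lam i \<longleftrightarrow> ks_case1 lam i \<or> ks_case2 eps lam i"

text \<open>One step of the KS algorithm; positions are 1-based (list position j is part j+1);
  zero parts are discarded.  Outside Cases 1 and 2 the value is irrelevant.\<close>
definition ks_step :: "int \<Rightarrow> nat list \<Rightarrow> nat \<Rightarrow> nat list" where
  "ks_step eps lam i =
    (if ks_case1 lam i then
       filter (\<lambda>x. x > 0) (map (\<lambda>(j, x). if j + 1 \<le> i then x - 2 else x) (enumerate 0 lam))
     else if ks_case2 eps lam i then
       filter (\<lambda>x. x > 0) (map (\<lambda>(j, x). if j + 1 < i then x - 2
                                        else if j + 1 = i \<or> j + 1 = i + 1 then x - 1 else x)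
                                (enumerate 0 lam))
     else lam)"

fun ks_adm_seq :: "int \<Rightarrow> nat list \<Rightarrow> nat list \<Rightarrow> bool" where
  "ks_adm_seq eps lam [] = True"
| "ks_adm_seq eps lam (i # is) \<longleftrightarrow> ks_admissible eps lam i \<and> ks_adm_seq eps (ks_step eps lam i) is"

fun ks_seq :: "int \<Rightarrow> nat list \<Rightarrow> nat list \<Rightarrow> nat list" where
  "ks_seq eps lam [] = lam"
| "ks_seq eps lam (i # is) = ks_seq eps (ks_step eps lam i) is"

end

theory Submission
  imports Defs
begin


lemma part_Cons: "part (x#xs) j = (if j = 0 then 0 else if j = 1 then x else part xs (j-1))"
  by (cases j) (auto simp: part_def nth_Cons')

lemma part_Nil[simp]: "part [] j = 0" by (simp add: part_def)

lemma part_filter_pos: "sorted_wrt (\<ge>) xs \<Longrightarrow> part (filter (\<lambda>x. 0<x) xs) j = part xs j"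
proof (induction xs arbitrary: j)
  case Nil then show ?case by simp
next
  case (Cons x xs)
  show ?case
  proof (cases "0 < x")
    case True then show ?thesis using Cons by (simp add: part_Cons)
  next
    case False
    then have z: "\<forall>y\<in>set xs. y = 0" using Cons.prems by auto
    then have "filter (\<lambda>x. 0<x) xs = []" by (auto simp: filter_empty_conv)
    moreover have "part xs k = 0" for k using z by (auto simp: part_def)
    ultimately show ?thesis using False by (simp add: part_Cons)
  qed
qed

lemma part_map_enum: "part (map g (enumerate 0 xs)) j = (if 1 \<le> j \<and> j \<le> length xs then g (j-1, xs!(j-1)) else 0)"
  by (auto simp: part_def nth_enumerate_eq)

lemma sorted_from_part:
  assumes "\<And>j. 1 \<le> j \<Longrightarrow> part xs (j+1) \<le> part xs j"
  shows "sorted_wrt (\<ge>) xs"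
proof -
  have "transp ((\<ge>) :: nat \<Rightarrow> nat \<Rightarrow> bool)" by (auto simp: transp_def)
  moreover have "xs ! Suc i \<le> xs ! i" if "Suc i < length xs" for i
    using assms[of "Suc i"] that by (simp add: part_def)
  ultimately show ?thesis by (simp add: sorted_wrt_iff_nth_Suc_transp)
qed

lemma part_mono: "sorted_wrt (\<ge>) xs \<Longrightarrow> 1 \<le> a \<Longrightarrow> a \<le> b \<Longrightarrow> part xs b \<le> part xs a"
proof -
  assume s: "sorted_wrt (\<ge>) xs" and a: "1 \<le> a" "a \<le> b"
  show ?thesis
  proof (cases "b \<le> length xs")
    case True
    then show ?thesis using a s by (cases "a = b") (auto simp: part_def sorted_wrt_iff_nth_less)
  qed (simp add: part_def)
qed

lemma len_part: "\<forall>x\<in>set xs. x \<ge> 1 \<Longrightarrow> (k < length xs \<longleftrightarrow> 0 < part xs (k+1))"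
  by (auto simp: part_def) (metis One_nat_def Suc_le_eq nth_mem)



definition TS :: "int \<Rightarrow> (nat \<Rightarrow> nat) \<Rightarrow> nat set" where
  "TS eps p = {k. 1 \<le> k \<and> 0 < p (k+1) \<and> sgn_par eps (p k) = -1 \<and> sgn_par eps (p (k+1)) = -1 \<and>
     p (k-1) \<noteq> p k \<and> p (k+1) \<noteq> p (k+2)}"

definition badp :: "(nat \<Rightarrow> nat) \<Rightarrow> nat \<Rightarrow> bool" where
  "badp p k \<longleftrightarrow> (k > 1 \<and> even (int (p (k - 1)) - int (p k))) \<or> even (int (p (k + 1)) - int (p (k + 2)))"

lemma sgn_par_eq: "sgn_par eps m = (if even m then eps else -eps)"
  by (simp add: sgn_par_def)

lemma sgn2: "2 \<le> m \<Longrightarrow> sgn_par eps (m-2) = sgn_par eps m"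
  by (auto simp: sgn_par_eq)
lemma sgn1: "1 \<le> m \<Longrightarrow> sgn_par eps (m-1) = - sgn_par eps m"
  by (auto simp: sgn_par_eq)
lemma ev_l: "2 \<le> a \<Longrightarrow> even (int (a-2) - c) = even (int a - c)"
  by (simp add: of_nat_diff)
lemma ev_r: "2 \<le> a \<Longrightarrow> even (c - int (a-2)) = even (c - int a)"
  by (simp add: of_nat_diff)
lemma ev_l1: "1 \<le> a \<Longrightarrow> even (int (a-1) - c) = odd (int a - c)"
  by (simp add: of_nat_diff) presburger
lemma ev_r1: "1 \<le> a \<Longrightarrow> even (c - int (a-1)) = odd (c - int a)"
  by (simp add: of_nat_diff)
lemma sgn_diff: "odd (int a - int b) \<Longrightarrow> sgn_par eps a = - sgn_par eps b"
  by (auto simp: sgn_par_eq)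

lemma transfer:
  assumes "k \<in> TS eps q"
    "sgn_par eps (q k) = sgn_par eps (p k)" "sgn_par eps (q (k+1)) = sgn_par eps (p (k+1))"
    "q (k+1) \<le> p (k+1)"
    "q (k-1) \<noteq> q k \<Longrightarrow> p (k-1) \<noteq> p k" "q (k+1) \<noteq> q (k+2) \<Longrightarrow> p (k+1) \<noteq> p (k+2)"
    "k > 1 \<Longrightarrow> even (int (q (k-1)) - int (q k)) = even (int (p (k-1)) - int (p k))"
    "even (int (q (k+1)) - int (q (k+2))) = even (int (p (k+1)) - int (p (k+2)))"
  shows "k \<in> TS eps p \<and> (\<not> badp p k \<longrightarrow> \<not> badp q k)"
  using assms unfolding TS_def badp_def by auto

lemma core1:
  assumes p0: "p 0 = 0" and mono: "\<And>a b. 1 \<le> a \<Longrightarrow> a \<le> b \<Longrightarrow> p b \<le> p a"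
    and c: "p (i+1) + 2 \<le> p i" "1 \<le> i"
    and q: "\<And>j. q j = (if j \<le> i then p j - 2 else p j)"
  shows "TS eps q \<subseteq> TS eps p \<and> ((\<forall>k\<in>TS eps p. \<not> badp p k) \<longrightarrow> (\<forall>k\<in>TS eps q. \<not> badp q k))"
proof -
  have big: "2 \<le> p j" if "1 \<le> j" "j \<le> i" for j using mono[OF that] c by linarith
  have sub: "k \<in> TS eps p \<and> (\<not> badp p k \<longrightarrow> \<not> badp q k)" if k: "k \<in> TS eps q" for k
  proof -
    from k have k1: "1 \<le> k" and qp: "0 < q (k+1)" by (auto simp: TS_def)
    have m1: "p (k+2) \<le> p (k+1)" "p (k+1) \<le> p k" using mono k1 by auto
    have pk1: "k = 1 \<Longrightarrow> p (k-1) = 0" using p0 by simp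
    have le: "q (k+1) \<le> p (k+1)" using q by simp
    have pos: "0 < p k" using le qp m1 by linarith
    consider (A) "k+2 \<le> i" | (B) "k+1 = i" | (C) "k = i" | (D) "k = i+1" | (E) "i+2 \<le> k" by linarith
    then show ?thesis
    proof cases
      case A
      then have e: "q (k-1) = p (k-1) - 2" "q k = p k - 2" "q (k+1) = p (k+1) - 2" "q (k+2) = p (k+2) - 2"
        and b: "2 \<le> p k" "2 \<le> p (k+1)" "2 \<le> p (k+2)" "k > 1 \<Longrightarrow> 2 \<le> p (k-1)"
        using q big k1 p0 by auto
      show ?thesis
      proof (rule transfer[OF k])
        show "sgn_par eps (q k) = sgn_par eps (p k)" using e b by (simp add: sgn2)
        show "sgn_par eps (q (k+1)) = sgn_par eps (p (k+1))" using e b by (simp add: sgn2)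
        show "q (k+1) \<le> p (k+1)" by (rule le)
        show "p (k-1) \<noteq> p k" if "q (k-1) \<noteq> q k"
          using that e b pk1 pos by (cases "k = 1") auto
        show "p (k+1) \<noteq> p (k+2)" if "q (k+1) \<noteq> q (k+2)" using that e by auto
        show "even (int (q (k-1)) - int (q k)) = even (int (p (k-1)) - int (p k))" if "k > 1"
          using that e b by (simp add: ev_l ev_r)
        show "even (int (q (k+1)) - int (q (k+2))) = even (int (p (k+1)) - int (p (k+2)))"
          using e b by (simp add: ev_l ev_r)
      qed
    next
      case B
      then have e: "q (k-1) = p (k-1) - 2" "q k = p k - 2" "q (k+1) = p (k+1) - 2" "q (k+2) = p (k+2)"
        and b: "2 \<le> p k" "2 \<le> p (k+1)" "k > 1 \<Longrightarrow> 2 \<le> p (k-1)"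
        using q big k1 p0 by auto
      have cc: "p (k+2) + 2 \<le> p (k+1)" using c(1) by (simp add: B[symmetric])
      show ?thesis
      proof (rule transfer[OF k])
        show "sgn_par eps (q k) = sgn_par eps (p k)" using e b by (simp add: sgn2)
        show "sgn_par eps (q (k+1)) = sgn_par eps (p (k+1))" using e b by (simp add: sgn2)
        show "q (k+1) \<le> p (k+1)" by (rule le)
        show "p (k-1) \<noteq> p k" if "q (k-1) \<noteq> q k"
          using that e b pk1 pos by (cases "k = 1") auto
        show "p (k+1) \<noteq> p (k+2)" if "q (k+1) \<noteq> q (k+2)" using cc by auto
        show "even (int (q (k-1)) - int (q k)) = even (int (p (k-1)) - int (p k))" if "k > 1"
          using that e b by (simp add: ev_l ev_r)
        show "even (int (q (k+1)) - int (q (k+2))) = even (int (p (k+1)) - int (p (k+2)))"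
          using e b by (simp add: ev_l ev_r)
      qed
    next
      case C
      then have e: "q (k-1) = p (k-1) - 2" "q k = p k - 2" "q (k+1) = p (k+1)" "q (k+2) = p (k+2)"
        and b: "2 \<le> p k" "k > 1 \<Longrightarrow> 2 \<le> p (k-1)"
        using q big k1 p0 by auto
      show ?thesis
      proof (rule transfer[OF k])
        show "sgn_par eps (q k) = sgn_par eps (p k)" using e b by (simp add: sgn2)
        show "sgn_par eps (q (k+1)) = sgn_par eps (p (k+1))" using e by simp
        show "q (k+1) \<le> p (k+1)" by (rule le)
        show "p (k-1) \<noteq> p k" if "q (k-1) \<noteq> q k"
          using that e b pk1 pos by (cases "k = 1") auto
        show "p (k+1) \<noteq> p (k+2)" if "q (k+1) \<noteq> q (k+2)" using that e by auto
        show "even (int (q (k-1)) - int (q k)) = even (int (p (k-1)) - int (p k))" if "k > 1"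
          using that e b by (simp add: ev_l ev_r)
        show "even (int (q (k+1)) - int (q (k+2))) = even (int (p (k+1)) - int (p (k+2)))"
          using e by simp
      qed
    next
      case D
      then have e: "q (k-1) = p (k-1) - 2" "q k = p k" "q (k+1) = p (k+1)" "q (k+2) = p (k+2)"
        and b: "2 \<le> p (k-1)" and cc: "p k + 2 \<le> p (k-1)"
        using q big k1 p0 c by auto
      show ?thesis
      proof (rule transfer[OF k])
        show "sgn_par eps (q k) = sgn_par eps (p k)" using e by simp
        show "sgn_par eps (q (k+1)) = sgn_par eps (p (k+1))" using e by simp
        show "q (k+1) \<le> p (k+1)" by (rule le)
        show "p (k-1) \<noteq> p k" if "q (k-1) \<noteq> q k" using cc by auto
        show "p (k+1) \<noteq> p (k+2)" if "q (k+1) \<noteq> q (k+2)" using that e by auto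
        show "even (int (q (k-1)) - int (q k)) = even (int (p (k-1)) - int (p k))" if "k > 1"
          using e b by (simp add: ev_l ev_r)
        show "even (int (q (k+1)) - int (q (k+2))) = even (int (p (k+1)) - int (p (k+2)))"
          using e by simp
      qed
    next
      case E
      then have e: "q (k-1) = p (k-1)" "q k = p k" "q (k+1) = p (k+1)" "q (k+2) = p (k+2)"
        using q by auto
      show ?thesis by (rule transfer[OF k]) (use e in auto)
    qed
  qed
  show ?thesis using sub by blast
qed

lemma transferTS:
  assumes "k \<in> TS eps q"
    "sgn_par eps (q k) = sgn_par eps (p k)" "sgn_par eps (q (k+1)) = sgn_par eps (p (k+1))"
    "q (k+1) \<le> p (k+1)"
    "q (k-1) \<noteq> q k \<Longrightarrow> p (k-1) \<noteq> p k" "q (k+1) \<noteq> q (k+2) \<Longrightarrow> p (k+1) \<noteq> p (k+2)"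
  shows "k \<in> TS eps p"
  using assms unfolding TS_def by auto

lemma core2:
  assumes p0: "p 0 = 0" and mono: "\<And>a b. 1 \<le> a \<Longrightarrow> a \<le> b \<Longrightarrow> p b \<le> p a"
    and iT: "i \<in> TS eps p" and eq: "p i = p (i+1)"
    and q: "\<And>j. q j = (if j < i then p j - 2 else if j = i \<or> j = i+1 then p j - 1 else p j)"
  shows "TS eps q \<subseteq> TS eps p \<and> ((\<forall>k\<in>TS eps p. \<not> badp p k) \<longrightarrow> (\<forall>k\<in>TS eps q. \<not> badp q k))"
proof -
  from iT have i1: "1 \<le> i" and ip: "0 < p (i+1)" and si1: "sgn_par eps (p i) = -1" and si2: "sgn_par eps (p (i+1)) = -1"
      and di1: "p (i-1) \<noteq> p i" and di2: "p (i+1) \<noteq> p (i+2)" by (auto simp: TS_def)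
  have big: "2 \<le> p j" if "1 \<le> j" "j < i" for j
  proof -
    have "p (i-1) \<le> p j" using mono[of j "i-1"] that by simp
    moreover have "p i \<le> p (i-1)" using mono[of "i-1" i] that by simp
    ultimately show ?thesis using di1 ip eq by linarith
  qed
  have ni: "(\<forall>k\<in>TS eps p. \<not> badp p k) \<Longrightarrow> \<not> badp p i" using iT by blast
  have sub: "k \<in> TS eps p \<and> ((\<forall>k\<in>TS eps p. \<not> badp p k) \<longrightarrow> \<not> badp q k)" if k: "k \<in> TS eps q" for k
  proof -
    from k have k1: "1 \<le> k" and qp: "0 < q (k+1)" and s1: "sgn_par eps (q k) = -1" and s2: "sgn_par eps (q (k+1)) = -1"
      by (auto simp: TS_def)
    have m1: "p (k+2) \<le> p (k+1)" "p (k+1) \<le> p k" using mono k1 by auto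
    have pk1: "k = 1 \<Longrightarrow> p (k-1) = 0" using p0 by simp
    have le: "q (k+1) \<le> p (k+1)" using q by simp
    have pos: "0 < p k" using le qp m1 by linarith
    consider (A) "k+2 < i" | (B) "k+2 = i" | (C) "k+1 = i" | (D) "k = i" | (E) "k = i+1" | (F) "k = i+2" | (G) "i+3 \<le> k" by linarith
    then show ?thesis
    proof cases
      case A
      then have e: "q (k-1) = p (k-1) - 2" "q k = p k - 2" "q (k+1) = p (k+1) - 2" "q (k+2) = p (k+2) - 2"
        and b: "2 \<le> p k" "2 \<le> p (k+1)" "2 \<le> p (k+2)" "k > 1 \<Longrightarrow> 2 \<le> p (k-1)"
        using q big k1 p0 by auto
      have "k \<in> TS eps p \<and> (\<not> badp p k \<longrightarrow> \<not> badp q k)"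
      proof (rule transfer[OF k])
        show "sgn_par eps (q k) = sgn_par eps (p k)" using e b by (simp add: sgn2)
        show "sgn_par eps (q (k+1)) = sgn_par eps (p (k+1))" using e b by (simp add: sgn2)
        show "q (k+1) \<le> p (k+1)" by (rule le)
        show "p (k-1) \<noteq> p k" if "q (k-1) \<noteq> q k"
          using that e b pk1 pos by (cases "k = 1") auto
        show "p (k+1) \<noteq> p (k+2)" if "q (k+1) \<noteq> q (k+2)" using that e by auto
        show "even (int (q (k-1)) - int (q k)) = even (int (p (k-1)) - int (p k))" if "k > 1"
          using that e b by (simp add: ev_l ev_r)
        show "even (int (q (k+1)) - int (q (k+2))) = even (int (p (k+1)) - int (p (k+2)))"
          using e b by (simp add: ev_l ev_r)
      qed
      then show ?thesis using k by blast
    next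
      case B
      then have e: "q (k-1) = p (k-1) - 2" "q k = p k - 2" "q (k+1) = p (k+1) - 2" "q (k+2) = p (k+2) - 1"
        and b: "2 \<le> p k" "2 \<le> p (k+1)" "k > 1 \<Longrightarrow> 2 \<le> p (k-1)"
        using q big k1 p0 by auto
      have x: "p (k+1) \<noteq> p (k+2)" "p (k+2) = p i" "p (k+1) = p (i-1)" using B di1 by auto
      have "k \<in> TS eps p"
      proof (rule transferTS[OF k])
        show "sgn_par eps (q k) = sgn_par eps (p k)" using e b by (simp add: sgn2)
        show "sgn_par eps (q (k+1)) = sgn_par eps (p (k+1))" using e b by (simp add: sgn2)
        show "q (k+1) \<le> p (k+1)" by (rule le)
        show "p (k-1) \<noteq> p k" if "q (k-1) \<noteq> q k"
          using that e b pk1 pos by (cases "k = 1") auto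
        show "p (k+1) \<noteq> p (k+2)" if "q (k+1) \<noteq> q (k+2)" using x by auto
      qed
      moreover have "(\<forall>k\<in>TS eps p. \<not> badp p k) \<Longrightarrow> False"
      proof -
        assume "\<forall>k\<in>TS eps p. \<not> badp p k"
        then have "\<not> badp p i" using ni by blast
        moreover have "i > 1" using B k1 by simp
        ultimately have "odd (int (p (i-1)) - int (p i))" unfolding badp_def by auto
        then have "sgn_par eps (p (i-1)) = - sgn_par eps (p i)" by (rule sgn_diff)
        moreover have "sgn_par eps (p (k+1)) = -1" using s2 e b by (simp add: sgn2)
        ultimately show False using si1 x by simp
      qed
      ultimately show ?thesis by blast
    next
      case C
      then have "sgn_par eps (q (k+1)) = 1" using q si1 sgn1[of "p i" eps] ip eq by auto
      then show ?thesis using s2 by simp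
    next
      case D
      then have "sgn_par eps (q k) = 1" using q si1 sgn1[of "p i" eps] ip eq by auto
      then show ?thesis using s1 by simp
    next
      case E
      then have "sgn_par eps (q k) = 1" using q si2 sgn1[of "p (i+1)" eps] ip eq by auto
      then show ?thesis using s1 by simp
    next
      case F
      then have e: "q (k-1) = p (k-1) - 1" "q k = p k" "q (k+1) = p (k+1)" "q (k+2) = p (k+2)"
        using q by auto
      have x: "p (k-1) \<noteq> p k" "p k = p (i+2)" "p (k-1) = p (i+1)" using F di2 by auto
      have "k \<in> TS eps p"
      proof (rule transferTS[OF k])
        show "sgn_par eps (q k) = sgn_par eps (p k)" using e by simp
        show "sgn_par eps (q (k+1)) = sgn_par eps (p (k+1))" using e by simp
        show "q (k+1) \<le> p (k+1)" by (rule le)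
        show "p (k-1) \<noteq> p k" if "q (k-1) \<noteq> q k" using x by auto
        show "p (k+1) \<noteq> p (k+2)" if "q (k+1) \<noteq> q (k+2)" using that e by auto
      qed
      moreover have "(\<forall>k\<in>TS eps p. \<not> badp p k) \<Longrightarrow> False"
      proof -
        assume "\<forall>k\<in>TS eps p. \<not> badp p k"
        then have "\<not> badp p i" using ni by blast
        then have "odd (int (p (i+1)) - int (p (i+2)))" unfolding badp_def by auto
        then have "sgn_par eps (p (i+1)) = - sgn_par eps (p (i+2))" by (rule sgn_diff)
        moreover have "sgn_par eps (p k) = -1" using s1 e by simp
        ultimately show False using si2 x by simp
      qed
      ultimately show ?thesis by blast
    next
      case G
      then have e: "q (k-1) = p (k-1)" "q k = p k" "q (k+1) = p (k+1)" "q (k+2) = p (k+2)"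
        using q by auto
      have "k \<in> TS eps p \<and> (\<not> badp p k \<longrightarrow> \<not> badp q k)" by (rule transfer[OF k]) (use e in auto)
      then show ?thesis by blast
    qed
  qed
  show ?thesis using sub by blast
qed



lemma two_steps_TS: "\<forall>x\<in>set l. x \<ge> 1 \<Longrightarrow> two_steps eps l = TS eps (part l)"
  using len_part[of l] unfolding two_steps_def TS_def by auto

lemma ns_TS: "\<forall>x\<in>set l. x \<ge> 1 \<Longrightarrow> non_singular eps l = (\<forall>k\<in>TS eps (part l). \<not> badp (part l) k)"
  using two_steps_TS[of l eps] unfolding non_singular_def bad_step_def badp_def by simp

lemma step:
  assumes s: "sorted_wrt (\<ge>) lam" and pos: "\<forall>x\<in>set lam. x \<ge> 1" and adm: "ks_admissible eps lam i"
  shows "sorted_wrt (\<ge>) (ks_step eps lam i) \<and> (\<forall>x\<in>set (ks_step eps lam i). x \<ge> 1) \<and>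
    two_steps eps (ks_step eps lam i) \<subseteq> two_steps eps lam \<and>
    (non_singular eps lam \<longrightarrow> non_singular eps (ks_step eps lam i))"
proof -
  define p where "p = part lam"
  have p0: "p 0 = 0" by (simp add: p_def part_def)
  have mono: "\<And>a b. 1 \<le> a \<Longrightarrow> a \<le> b \<Longrightarrow> p b \<le> p a" using part_mono[OF s] p_def by blast
  have plen: "\<And>j. 1 \<le> j \<Longrightarrow> j \<le> length lam \<Longrightarrow> p j = lam ! (j-1)" "\<And>j. \<not> (1 \<le> j \<and> j \<le> length lam) \<Longrightarrow> p j = 0"
    by (auto simp: p_def part_def)
  obtain xs where l': "ks_step eps lam i = filter (\<lambda>x. 0 < x) xs" and sx: "sorted_wrt (\<ge>) xs"
    and core: "TS eps (part xs) \<subseteq> TS eps p \<and> ((\<forall>k\<in>TS eps p. \<not> badp p k) \<longrightarrow> (\<forall>k\<in>TS eps (part xs). \<not> badp (part xs) k))"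
  proof (cases "ks_case1 lam i")
    case True
    define xs where "xs = map (\<lambda>(j, x). if j + 1 \<le> i then x - 2 else x) (enumerate 0 lam)"
    have c: "p (i+1) + 2 \<le> p i" "1 \<le> i" using True by (auto simp: ks_case1_def p_def)
    have px: "part xs j = (if j \<le> i then p j - 2 else p j)" for j
      unfolding xs_def part_map_enum using plen[of j] by auto
    have sx: "sorted_wrt (\<ge>) xs"
    proof (rule sorted_from_part)
      fix j :: nat assume "1 \<le> j"
      then show "part xs (j+1) \<le> part xs j" using mono[of j "j+1"] c unfolding px by (cases "j = i") auto
    qed
    have "ks_step eps lam i = filter (\<lambda>x. 0 < x) xs" using True by (simp add: ks_step_def xs_def)
    moreover have "TS eps (part xs) \<subseteq> TS eps p \<and> ((\<forall>k\<in>TS eps p. \<not> badp p k) \<longrightarrow> (\<forall>k\<in>TS eps (part xs). \<not> badp (part xs) k))"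
      by (rule core1[OF p0 mono c px])
    ultimately show ?thesis using that sx by blast
  next
    case False
    then have c2: "ks_case2 eps lam i" using adm by (simp add: ks_admissible_def)
    define xs where "xs = map (\<lambda>(j, x). if j + 1 < i then x - 2
                                        else if j + 1 = i \<or> j + 1 = i + 1 then x - 1 else x) (enumerate 0 lam)"
    have iT: "i \<in> TS eps p" and eq: "p i = p (i+1)" using c2 two_steps_TS[OF pos, of eps]
      by (auto simp: ks_case2_def p_def)
    have i1: "1 \<le> i" and di1: "p (i-1) \<noteq> p i" and di2: "p (i+1) \<noteq> p (i+2)" and ip: "0 < p (i+1)"
      using iT by (auto simp: TS_def)
    have ilen: "i + 1 \<le> length lam" using ip plen(2)[of "i+1"] by fastforce
    have px: "part xs j = (if j < i then p j - 2 else if j = i \<or> j = i+1 then p j - 1 else p j)" for j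
      unfolding xs_def part_map_enum using plen[of j] ilen i1 p0 by auto
    have sx: "sorted_wrt (\<ge>) xs"
    proof (rule sorted_from_part)
      fix j :: nat assume j: "1 \<le> j"
      have m: "p (j+1) \<le> p j" using mono[of j "j+1"] j by auto
      show "part xs (j+1) \<le> part xs j"
      proof (cases "j + 1 = i")
        case True
        then have "p (j+1) + 1 \<le> p j" using m di1 by auto
        then show ?thesis using True unfolding px by auto
      next
        case False
        then show ?thesis using m di2 eq j unfolding px by auto
      qed
    qed
    have "ks_step eps lam i = filter (\<lambda>x. 0 < x) xs" using False c2 by (simp add: ks_step_def xs_def)
    moreover have "TS eps (part xs) \<subseteq> TS eps p \<and> ((\<forall>k\<in>TS eps p. \<not> badp p k) \<longrightarrow> (\<forall>k\<in>TS eps (part xs). \<not> badp (part xs) k))"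
      by (rule core2[OF p0 mono iT eq px])
    ultimately show ?thesis using that sx by blast
  qed
  have pl: "part (ks_step eps lam i) = part xs" using l' part_filter_pos[OF sx] by auto
  have pos': "\<forall>x\<in>set (ks_step eps lam i). x \<ge> 1" using l' by auto
  have "sorted_wrt (\<ge>) (ks_step eps lam i)" using l' sx by (simp add: sorted_wrt_filter)
  then show ?thesis using core pos pos' pl two_steps_TS[OF pos] two_steps_TS[OF pos'] ns_TS[OF pos] ns_TS[OF pos']
    unfolding p_def by auto
qed

lemma seq:
  "sorted_wrt (\<ge>) lam \<Longrightarrow> \<forall>x\<in>set lam. x \<ge> 1 \<Longrightarrow> ks_adm_seq eps lam is \<Longrightarrow>
   two_steps eps (ks_seq eps lam is) \<subseteq> two_steps eps lam \<and>
   (non_singular eps lam \<longrightarrow> non_singular eps (ks_seq eps lam is))"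
proof (induction "is" arbitrary: lam)
  case Nil then show ?case by simp
next
  case (Cons i "is")
  then have a: "ks_admissible eps lam i" and b: "ks_adm_seq eps (ks_step eps lam i) is" by auto
  from step[OF Cons.prems(1,2) a] Cons.IH[of "ks_step eps lam i"] b show ?case by auto
qed


theorem mainTheorem9:
  fixes eps :: int and N :: nat and lam :: "nat list" and "is" :: "nat list"
  assumes "eps = 1 \<or> eps = -1"
    and "P_eps eps N lam"
    and "ks_adm_seq eps lam is"
  shows "two_steps eps (ks_seq eps lam is) \<subseteq> two_steps eps lam
         \<and> (non_singular eps lam \<longrightarrow> non_singular eps (ks_seq eps lam is))"
  using seq[of lam eps "is"] assms(2,3) unfolding P_eps_def by blast

end
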